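(* Let $\mathbf{A}_b\in\{0,1\}^{|\mathcal{U}|\times|\mathcal{I}|}$ be the bi-adjacency matrix of a user-item bipartite graph for behavior $b$, and let $\tilde{\mathbf{A}}_b$ be its symmetrically normalized version. Let $\alpha,\beta\ge 0$ with $\gamma = 1-\alpha-\beta\in(0,1)$. Fix vectors $\mathbf{q}_{\mathcal{U}_b},\mathbf{r}_{\mathcal{U}_{b'}}\in\mathbb{R}^{|\mathcal{U}|}$ and $\mathbf{q}_{\mathcal{I}_b},\mathbf{r}_{\mathcal{I}_{b'}}\in\mathbb{R}^{|\mathcal{I}|}$, and starting vectors $\mathbf{r}^{(0)}_{\mathcal{U}_b}$ and $\mathbf{r}^{(0)}_{\mathcal{I}_b}$ (in the algorithm these are $\mathbf{q}_{\mathcal{U}_b}$ and $\mathbf{q}_{\mathcal{I}_b}$). Consider the power iteration, for $k\ge 1$, $$\mathbf{r}^{(k)}_{\mathcal{U}_b} = \gamma\,\tilde{\mathbf{A}}_b\,\mathbf{r}^{(k-1)}_{\mathcal{I}_b} + \alpha\,\mathbf{q}_{\mathcal{U}_b} + \beta\,\mathbf{r}_{\mathcal{U}_{b'}},$$ $$\mathbf{r}^{(k)}_{\mathcal{I}_b} = \gamma\,\tilde{\mathbf{A}}_b^{\top}\,\mathbf{r}^{(k-1)}_{\mathcal{U}_b} + \alpha\,\mathbf{q}_{\mathcal{I}_b} + \beta\,\mathbf{r}_{\mathcal{I}_{b'}}.$$ Then the sequences $\mathbf{r}^{(k)}_{\mathcal{U}_b}$ and $\mathbf{r}^{(k)}_{\mathcal{I}_b}$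 converge as $k\to\infty$.
   Context: Degrees: $d_b(u)=\sum_i\mathbf{A}_b(u,i)$ and $d_b(i)=\sum_u\mathbf{A}_b(u,i)$. The symmetrically normalized bi-adjacency matrix $\tilde{\mathbf{A}}_b$ has entries $\tilde{\mathbf{A}}_b(u,i)=\mathbf{A}_b(u,i)/(\sqrt{d_b(u)}\sqrt{d_b(i)})$ when $\mathbf{A}_b(u,i)=1$, and $0$ otherwise; equivalently $\tilde{\mathbf{A}}_b=\mathbf{D}_{\mathcal{U}_b}^{-1/2}\mathbf{A}_b\mathbf{D}_{\mathcal{I}_b}^{-1/2}$. Here $\mathbf{r}_{\mathcal{U}_{b'}}$ and $\mathbf{r}_{\mathcal{I}_{b'}}$ are the fixed ranking vectors of the preceding behavior $b'$ in the cascading sequence. The iteration is the inner loop of the CascadingRank algorithm when it is run without the early-stopping criterion. *)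

theory Defs
  imports "HOL-Analysis.Analysis"
begin

text \<open>Bi-adjacency matrix A_b of type real^'i^'u (rows = users, columns = items).\<close>

definition user_deg :: "real^'i^'u \<Rightarrow> 'u \<Rightarrow> real" where
  "user_deg A u = (\<Sum>i\<in>UNIV. A $ u $ i)"

definition item_deg :: "real^'i^'u \<Rightarrow> 'i \<Rightarrow> real" where
  "item_deg A i = (\<Sum>u\<in>UNIV. A $ u $ i)"

definition norm_biadj :: "real^'i^'u \<Rightarrow> real^'i^'u" where
  "norm_biadj A = (\<chi> u i. if A $ u $ i = 1
      then A $ u $ i / (sqrt (user_deg A u) * sqrt (item_deg A i)) else 0)"

text \<open>CascadingRank inner-loop power iteration (no early stopping).
  Returns the pair (user ranking r_U^(k), item ranking r_I^(k)).\<close>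
primrec cr_iter :: "real^'i^'u \<Rightarrow> real \<Rightarrow> real \<Rightarrow>
    real^'u \<Rightarrow> real^'i \<Rightarrow> real^'u \<Rightarrow> real^'i \<Rightarrow> real^'u \<Rightarrow> real^'i \<Rightarrow>
    nat \<Rightarrow> (real^'u) \<times> (real^'i)" where
  "cr_iter A \<alpha> \<beta> qU qI rU' rI' r0U r0I 0 = (r0U, r0I)"
| "cr_iter A \<alpha> \<beta> qU qI rU' rI' r0U r0I (Suc k) =
     (let (rU, rI) = cr_iter A \<alpha> \<beta> qU qI rU' rI' r0U r0I k;
          \<gamma> = 1 - \<alpha> - \<beta> in
      (\<gamma> *\<^sub>R (norm_biadj A *v rI) + \<alpha> *\<^sub>R qU + \<beta> *\<^sub>R rU',
       \<gamma> *\<^sub>R (transpose (norm_biadj A) *v rU) + \<alpha> *\<^sub>R qI + \<beta> *\<^sub>R rI'))"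

end

theory Submission
  imports Defs
begin

lemma norm_biadj_entry:
  assumes "\<forall>u i. A $ u $ i \<in> {0, 1}"
  shows "norm_biadj A $ u $ i = A $ u $ i / (sqrt (user_deg A u) * sqrt (item_deg A i))"
  using assms unfolding norm_biadj_def by (cases "A $ u $ i = 1") auto

lemma user_deg_nonneg:
  assumes "\<forall>u i. A $ u $ i \<in> {0, 1}"
  shows "user_deg A u \<ge> 0"
  unfolding user_deg_def using assms by (intro sum_nonneg) (metis insert_iff order_refl singletonD zero_le_one)

lemma item_deg_nonneg:
  assumes "\<forall>u i. A $ u $ i \<in> {0, 1}"
  shows "item_deg A i \<ge> 0"
  unfolding item_deg_def using assms by (intro sum_nonneg) (metis insert_iff order_refl singletonD zero_le_one)

lemma sq01: "(x::real) \<in> {0,1} \<Longrightarrow> x * x = x" by auto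

lemma norm_biadj_bound:
  fixes A :: "real^'i::finite^'u::finite"
  assumes A01: "\<forall>u i. A $ u $ i \<in> {0, 1}"
  shows "inner (norm_biadj A *v y) (norm_biadj A *v y) \<le> inner y y"
proof -
  define M where "M = norm_biadj A"
  define a where "a u i = A $ u $ i / sqrt (user_deg A u)" for u i
  define b where "b u i = A $ u $ i * y $ i / sqrt (item_deg A i)" for u i
  have Mab: "M $ u $ i * y $ i = a u i * b u i" for u i
    using norm_biadj_entry[OF A01, of u i] sq01[of "A $ u $ i"] A01
    by (simp add: M_def a_def b_def field_simps)
  have row: "((M *v y) $ u)\<^sup>2 \<le> (\<Sum>i\<in>UNIV. (a u i)\<^sup>2) * (\<Sum>i\<in>UNIV. (b u i)\<^sup>2)" for u
    unfolding matrix_vector_mult_def using Cauchy_Schwarz_ineq_sum[of "a u" "b u" UNIV]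
    by (simp add: Mab)
  have suma: "(\<Sum>i\<in>UNIV. (a u i)\<^sup>2) \<le> 1" for u
  proof -
    have "(a u i)\<^sup>2 = A $ u $ i / user_deg A u" for i
      using sq01[of "A $ u $ i"] A01 user_deg_nonneg[OF A01, of u]
      by (simp add: a_def power2_eq_square field_simps)
    hence "(\<Sum>i\<in>UNIV. (a u i)\<^sup>2) = (\<Sum>i\<in>UNIV. A $ u $ i) / user_deg A u"
      by (simp add: sum_divide_distrib)
    hence "(\<Sum>i\<in>UNIV. (a u i)\<^sup>2) = user_deg A u / user_deg A u"
      by (simp add: user_deg_def)
    thus ?thesis by simp
  qed
  have row2: "((M *v y) $ u)\<^sup>2 \<le> (\<Sum>i\<in>UNIV. (b u i)\<^sup>2)" for u
  proof -
    have "0 \<le> (\<Sum>i\<in>UNIV. (b u i)\<^sup>2)" by (simp add: sum_nonneg)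
    hence "(\<Sum>i\<in>UNIV. (a u i)\<^sup>2) * (\<Sum>i\<in>UNIV. (b u i)\<^sup>2) \<le> (\<Sum>i\<in>UNIV. (b u i)\<^sup>2)"
      using suma[of u] by (simp add: mult_left_le_one_le sum_nonneg)
    thus ?thesis using row[of u] by linarith
  qed
  have colb: "(\<Sum>u\<in>UNIV. (b u i)\<^sup>2) \<le> (y $ i)\<^sup>2" for i
  proof -
    have "(b u i)\<^sup>2 = (y $ i)\<^sup>2 * (A $ u $ i / item_deg A i)" for u
      using sq01[of "A $ u $ i"] A01 item_deg_nonneg[OF A01, of i]
      by (simp add: b_def power2_eq_square field_simps)
    hence "(\<Sum>u\<in>UNIV. (b u i)\<^sup>2) = (y $ i)\<^sup>2 * ((\<Sum>u\<in>UNIV. A $ u $ i) / item_deg A i)"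
      by (simp only: sum_divide_distrib sum_distrib_left)
    hence "(\<Sum>u\<in>UNIV. (b u i)\<^sup>2) = (y $ i)\<^sup>2 * (item_deg A i / item_deg A i)"
      by (simp add: item_deg_def)
    also have "\<dots> \<le> (y $ i)\<^sup>2"
      by (cases "item_deg A i = 0") simp_all
    finally show ?thesis .
  qed
  have "inner (M *v y) (M *v y) = (\<Sum>u\<in>UNIV. ((M *v y) $ u)\<^sup>2)"
    by (simp add: inner_vec_def power2_eq_square)
  also have "\<dots> \<le> (\<Sum>u\<in>UNIV. \<Sum>i\<in>UNIV. (b u i)\<^sup>2)"
    by (intro sum_mono row2)
  also have "\<dots> = (\<Sum>i\<in>UNIV. \<Sum>u\<in>UNIV. (b u i)\<^sup>2)"
    by (rule sum.swap)
  also have "\<dots> \<le> (\<Sum>i\<in>UNIV. (y $ i)\<^sup>2)"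
    by (intro sum_mono colb)
  also have "\<dots> = inner y y"
    by (simp add: inner_vec_def power2_eq_square)
  finally show ?thesis by (simp add: M_def)
qed

lemma transpose_norm_biadj:
  "transpose (norm_biadj A) = norm_biadj (transpose A)"
  unfolding transpose_def norm_biadj_def user_deg_def item_deg_def
  by (simp add: vec_eq_iff mult.commute)


lemma norm_biadj_norm:
  fixes A :: "real^'i::finite^'u::finite"
  assumes A01: "\<forall>u i. A $ u $ i \<in> {0, 1}"
  shows "norm (norm_biadj A *v y) \<le> norm y"
    and "norm (transpose (norm_biadj A) *v x) \<le> norm x"
proof -
  show "norm (norm_biadj A *v y) \<le> norm y"
    using norm_biadj_bound[OF A01] by (simp add: norm_le)
  have "\<forall>u i. transpose A $ u $ i \<in> {0, 1}" using A01 by (simp add: transpose_def)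
  thus "norm (transpose (norm_biadj A) *v x) \<le> norm x"
    using norm_biadj_bound[of "transpose A" x] by (simp add: norm_le transpose_norm_biadj)
qed

lemma conv_of_geom:
  fixes d :: "nat \<Rightarrow> 'a::banach"
  assumes "\<And>k. norm (d k) \<le> C * g ^ k" and "0 \<le> g" "g < 1"
    and "\<And>k. x (Suc k) = x k + d k"
  shows "convergent x"
proof -
  have "summable (\<lambda>k. C * g ^ k)" using assms by (simp add: summable_geometric)
  hence "summable d" by (rule summable_comparison_test'[where N=0]) (use assms(1) in auto)
  hence "(\<lambda>n. \<Sum>k<n. d k) \<longlonglongrightarrow> suminf d" by (rule summable_LIMSEQ)
  hence "(\<lambda>n. x 0 + (\<Sum>k<n. d k)) \<longlonglongrightarrow> x 0 + suminf d" by (intro tendsto_intros)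
  moreover have "x 0 + (\<Sum>k<n. d k) = x n" for n
    using sum_lessThan_telescope[of x n] assms(4) by simp
  ultimately show ?thesis unfolding convergent_def by auto
qed

theorem theorem2:
  fixes A :: "real^'i::finite^'u::finite"
    and \<alpha> \<beta> :: real
    and qU rU' r0U :: "real^'u"
    and qI rI' r0I :: "real^'i"
  assumes "\<forall>u i. A $ u $ i \<in> {0, 1}"
    and "\<alpha> \<ge> 0" and "\<beta> \<ge> 0"
    and "0 < 1 - \<alpha> - \<beta>" and "1 - \<alpha> - \<beta> < 1"
  shows "convergent (\<lambda>k. fst (cr_iter A \<alpha> \<beta> qU qI rU' rI' r0U r0I k))
       \<and> convergent (\<lambda>k. snd (cr_iter A \<alpha> \<beta> qU qI rU' rI' r0U r0I k))"
proof -
  define g where "g = 1 - \<alpha> - \<beta>"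
  define M where "M = norm_biadj A"
  define U where "U k = fst (cr_iter A \<alpha> \<beta> qU qI rU' rI' r0U r0I k)" for k
  define I where "I k = snd (cr_iter A \<alpha> \<beta> qU qI rU' rI' r0U r0I k)" for k
  have g: "0 < g" "g < 1" using assms by (auto simp: g_def)
  have U: "U (Suc k) = g *\<^sub>R (M *v I k) + \<alpha> *\<^sub>R qU + \<beta> *\<^sub>R rU'" for k
    by (simp add: U_def I_def M_def g_def Let_def split_beta)
  have I: "I (Suc k) = g *\<^sub>R (transpose M *v U k) + \<alpha> *\<^sub>R qI + \<beta> *\<^sub>R rI'" for k
    by (simp add: U_def I_def M_def g_def Let_def split_beta)
  define dU where "dU k = U (Suc k) - U k" for k
  define dI where "dI k = I (Suc k) - I k" for k
  have dU: "dU (Suc k) = g *\<^sub>R (M *v dI k)" for k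
  proof -
    have "dU (Suc k) = g *\<^sub>R (M *v I (Suc k)) - g *\<^sub>R (M *v I k)"
      unfolding dU_def U by simp
    thus ?thesis unfolding dI_def matrix_vector_mult_diff_distrib scaleR_diff_right .
  qed
  have dI: "dI (Suc k) = g *\<^sub>R (transpose M *v dU k)" for k
  proof -
    have "dI (Suc k) = g *\<^sub>R (transpose M *v U (Suc k)) - g *\<^sub>R (transpose M *v U k)"
      unfolding dI_def I by simp
    thus ?thesis unfolding dU_def matrix_vector_mult_diff_distrib scaleR_diff_right .
  qed
  define e where "e k = (norm (dU k))\<^sup>2 + (norm (dI k))\<^sup>2" for k
  have e: "e k \<le> (g\<^sup>2) ^ k * e 0" for k
  proof (induction k)
    case (Suc k)
    have "norm (dU (Suc k)) \<le> g * norm (dI k)"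
      using norm_biadj_norm(1)[OF assms(1), of "dI k"] g unfolding dU M_def by simp
    hence "(norm (dU (Suc k)))\<^sup>2 \<le> (g * norm (dI k))\<^sup>2"
      by (rule power_mono) simp
    hence 1: "(norm (dU (Suc k)))\<^sup>2 \<le> g\<^sup>2 * (norm (dI k))\<^sup>2"
      by (simp add: power_mult_distrib)
    have "norm (dI (Suc k)) \<le> g * norm (dU k)"
      using norm_biadj_norm(2)[OF assms(1), of "dU k"] g unfolding dI M_def by simp
    hence "(norm (dI (Suc k)))\<^sup>2 \<le> (g * norm (dU k))\<^sup>2"
      by (rule power_mono) simp
    hence 2: "(norm (dI (Suc k)))\<^sup>2 \<le> g\<^sup>2 * (norm (dU k))\<^sup>2"
      by (simp add: power_mult_distrib)
    have "e (Suc k) \<le> g\<^sup>2 * e k" using 1 2 by (simp add: e_def algebra_simps)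
    also have "\<dots> \<le> g\<^sup>2 * ((g\<^sup>2) ^ k * e 0)"
      using Suc by (intro mult_left_mono) auto
    finally show ?case by (simp add: algebra_simps)
  qed simp
  have e0: "0 \<le> e 0" by (simp add: e_def)
  have sq: "sqrt (e k) \<le> sqrt (e 0) * g ^ k" for k
  proof -
    have "sqrt (e k) \<le> sqrt ((g\<^sup>2) ^ k * e 0)" using e[of k] by (rule real_sqrt_le_mono)
    also have "(g\<^sup>2) ^ k * e 0 = (g ^ k)\<^sup>2 * e 0"
      by (simp add: power_mult[symmetric] mult.commute)
    also have "sqrt ((g ^ k)\<^sup>2 * e 0) = g ^ k * sqrt (e 0)" using g
      by (simp add: real_sqrt_mult)
    finally show ?thesis by (simp add: mult.commute)
  qed
  have bU: "norm (dU k) \<le> sqrt (e 0) * g ^ k" for k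
  proof -
    have "norm (dU k) \<le> sqrt (e k)" unfolding e_def
      by (rule real_le_rsqrt) simp
    thus ?thesis using sq[of k] by linarith
  qed
  have bI: "norm (dI k) \<le> sqrt (e 0) * g ^ k" for k
  proof -
    have "norm (dI k) \<le> sqrt (e k)" unfolding e_def
      by (rule real_le_rsqrt) simp
    thus ?thesis using sq[of k] by linarith
  qed
  have "convergent U"
    by (rule conv_of_geom[OF bU]) (use g in \<open>auto simp: dU_def\<close>)
  moreover have "convergent I"
    by (rule conv_of_geom[OF bI]) (use g in \<open>auto simp: dI_def\<close>)
  ultimately show ?thesis unfolding U_def I_def by simp
qed

end
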